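(* A set $\mathbf D$ of tilings of $[n]$ is a Condorcet super-domain if and only if for every 4-element subset $F=\{i<j<k<l\}\subseteq[n]$, the restriction $\mathbf D|_F=\{T\cap\Lambda^3(F): T\in\mathbf D\}$ is a Condorcet super-domain for the color set $F$.
   Context: For a finite totally ordered set $C$ of colors, let $\Lambda^3(C)$ be the set of 3-element subsets of $C$, a triple $\{a<b<c\}$ being written $abc$. For a 4-element subset $\{a<b<c<d\}\subseteq C$, its stick is the sequence $(abc,\ abd,\ acd,\ bcd)$. A tiling for the color set $C$ (the inversion set of a rhombus tiling of the zonogon $Z(C;2)$) is a subset $T\subseteq\Lambda^3(C)$ such that for every 4-element subset $G\subseteq C$, $T\cap\mathrm{stick}(G)$ is an initial segment or a final segment of $\mathrm{stick}(G)$ (empty set and whole stick allowed). Here $n\ge 4$, $[n]=\{1,\dots,n\}$ with its usual order, and "tiling" without qualification means tiling for the color set $[n]$; note that $T\cap\Lambda^3(F)$ is a tiling for $F$ whenever $T$ is a tiling for $[n]$. For a finite set $V$ of odd cardinality and a family $(T_v)_{v\in V}$ of tilings for $C$, $sm((T_v)_{v\in V})$ is the set of triples lying in $T_v$ for more than $|V|/2$ indices $v$. A set $\mathbf D$ of tilings for $C$ is a Condorcet super-domain for $C$ if for every finite $V$ of odd cardinality and every family $(T_v)_{v\in V}$ with all $T_v\in\mathbf D$, $sm((T_v)_{v\in V})$ is a tiling for $C$. *)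

theory Defs
  imports Main
begin

text \<open>Colors are natural numbers with their usual order; a triple abc is the 3-element set {a,b,c}.\<close>

definition Lambda3 :: "nat set \<Rightarrow> nat set set" where
  "Lambda3 C = {t. t \<subseteq> C \<and> card t = 3}"

text \<open>Stick of a 4-set {a<b<c<d}: the list [abc, abd, acd, bcd].\<close>
definition stick :: "nat set \<Rightarrow> nat set list" where
  "stick G = map (\<lambda>x. G - {x}) (rev (sorted_list_of_set G))"

definition is_tiling :: "nat set \<Rightarrow> nat set set \<Rightarrow> bool" where
  "is_tiling C T \<longleftrightarrow> T \<subseteq> Lambda3 C \<and>
     (\<forall>G. G \<subseteq> C \<and> card G = 4 \<longrightarrow>
        (\<exists>k. T \<inter> set (stick G) = set (take k (stick G))
            \<or> T \<inter> set (stick G) = set (drop k (stick G))))"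

definition sm :: "'v set \<Rightarrow> ('v \<Rightarrow> nat set set) \<Rightarrow> nat set set" where
  "sm V T = {t. 2 * card {v \<in> V. t \<in> T v} > card V}"

definition condorcet_super_domain :: "nat set \<Rightarrow> nat set set set \<Rightarrow> bool" where
  "condorcet_super_domain C D \<longleftrightarrow>
     (\<forall>(V :: nat set) T. finite V \<and> odd (card V) \<and> (\<forall>v\<in>V. T v \<in> D)
        \<longrightarrow> is_tiling C (sm V T))"

end

theory Submission
  imports Defs
begin

lemma sm_inter: "sm V (\<lambda>v. S v \<inter> L) = sm V S \<inter> L"
proof -
  have "t \<in> sm V (\<lambda>v. S v \<inter> L) \<longleftrightarrow> t \<in> sm V S \<inter> L" for t
  proof (cases "t \<in> L")
    case True
    then show ?thesis by (simp add: sm_def)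
  next
    case False
    then show ?thesis by (simp add: sm_def)
  qed
  then show ?thesis by blast
qed

lemma sm_cong: "(\<And>v. v \<in> V \<Longrightarrow> S v = S' v) \<Longrightarrow> sm V S = sm V S'"
proof -
  assume h: "\<And>v. v \<in> V \<Longrightarrow> S v = S' v"
  have "\<And>t. {v \<in> V. t \<in> S v} = {v \<in> V. t \<in> S' v}" using h by blast
  then show ?thesis unfolding sm_def by simp
qed

lemma sm_sub:
  assumes "\<forall>v\<in>V. S v \<subseteq> A"
  shows "sm V S \<subseteq> A"
proof
  fix t assume "t \<in> sm V S"
  then have "{v \<in> V. t \<in> S v} \<noteq> {}" unfolding sm_def by (cases "{v \<in> V. t \<in> S v} = {}") auto
  then show "t \<in> A" using assms by blast
qed

lemma stick_sub:
  assumes "G \<subseteq> F" "card G = 4"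
  shows "set (stick G) \<subseteq> Lambda3 F"
proof
  fix t assume "t \<in> set (stick G)"
  moreover have fin: "finite G" by (rule card_ge_0_finite) (simp add: assms(2))
  ultimately obtain x where x: "x \<in> G" "t = G - {x}" unfolding stick_def
    by (auto simp only: set_map set_rev set_sorted_list_of_set)
  have "card t = 3" using x fin assms(2) by simp
  then show "t \<in> Lambda3 F" using x assms(1) unfolding Lambda3_def by auto
qed

lemma tiling_restrict:
  assumes "is_tiling C T" "F \<subseteq> C"
  shows "is_tiling F (T \<inter> Lambda3 F)"
  unfolding is_tiling_def
proof (intro conjI allI impI)
  show "T \<inter> Lambda3 F \<subseteq> Lambda3 F" by blast
  fix G assume G: "G \<subseteq> F \<and> card G = 4"
  then have "T \<inter> Lambda3 F \<inter> set (stick G) = T \<inter> set (stick G)"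
    using stick_sub[of G F] by blast
  moreover have "G \<subseteq> C \<and> card G = 4" using G assms(2) by blast
  ultimately show "\<exists>k. T \<inter> Lambda3 F \<inter> set (stick G) = set (take k (stick G)) \<or>
             T \<inter> Lambda3 F \<inter> set (stick G) = set (drop k (stick G))"
    using assms(1) unfolding is_tiling_def by simp
qed

theorem proposition1:
  fixes n :: nat and D :: "nat set set set"
  assumes "n \<ge> 4"
    and "\<forall>T\<in>D. is_tiling {1..n} T"
  shows "condorcet_super_domain {1..n} D \<longleftrightarrow>
    (\<forall>F. F \<subseteq> {1..n} \<and> card F = 4 \<longrightarrow>
       condorcet_super_domain F ((\<lambda>T. T \<inter> Lambda3 F) ` D))"
proof
  assume H: "condorcet_super_domain {1..n} D"
  show "\<forall>F. F \<subseteq> {1..n} \<and> card F = 4 \<longrightarrow>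
       condorcet_super_domain F ((\<lambda>T. T \<inter> Lambda3 F) ` D)"
  proof (intro allI impI)
    fix F assume F: "F \<subseteq> {1..n} \<and> card F = 4"
    show "condorcet_super_domain F ((\<lambda>T. T \<inter> Lambda3 F) ` D)"
      unfolding condorcet_super_domain_def
    proof (intro allI impI)
      fix V :: "nat set" and T'
      assume A: "finite V \<and> odd (card V) \<and> (\<forall>v\<in>V. T' v \<in> (\<lambda>T. T \<inter> Lambda3 F) ` D)"
      define S where "S v = (SOME S. S \<in> D \<and> T' v = S \<inter> Lambda3 F)" for v
      have S: "S v \<in> D \<and> T' v = S v \<inter> Lambda3 F" if "v \<in> V" for v
      proof -
        have "\<exists>S. S \<in> D \<and> T' v = S \<inter> Lambda3 F" using A that by blast
        then show ?thesis unfolding S_def by (rule someI_ex)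
      qed
      have "finite V \<and> odd (card V) \<and> (\<forall>v\<in>V. S v \<in> D)" using A S by simp
      then have "is_tiling {1..n} (sm V S)" using H unfolding condorcet_super_domain_def
          by (elim allE[where x=V] allE[where x=S]) (erule mp)
      then have "is_tiling F (sm V S \<inter> Lambda3 F)" using F tiling_restrict by blast
      moreover have "sm V T' = sm V S \<inter> Lambda3 F"
      proof -
        have "sm V T' = sm V (\<lambda>v. S v \<inter> Lambda3 F)" using S by (intro sm_cong) simp
        then show ?thesis by (simp add: sm_inter)
      qed
      ultimately show "is_tiling F (sm V T')" by simp
    qed
  qed
next
  assume H: "\<forall>F. F \<subseteq> {1..n} \<and> card F = 4 \<longrightarrow>
       condorcet_super_domain F ((\<lambda>T. T \<inter> Lambda3 F) ` D)"
  show "condorcet_super_domain {1..n} D"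
    unfolding condorcet_super_domain_def
  proof (intro allI impI)
    fix V :: "nat set" and S
    assume A: "finite V \<and> odd (card V) \<and> (\<forall>v\<in>V. S v \<in> D)"
    show "is_tiling {1..n} (sm V S)"
      unfolding is_tiling_def
    proof (intro conjI allI impI)
      show "sm V S \<subseteq> Lambda3 {1..n}"
      proof (rule sm_sub, intro ballI)
        fix v assume "v \<in> V"
        then have "is_tiling {1..n} (S v)" using A assms(2) by blast
        then show "S v \<subseteq> Lambda3 {1..n}" unfolding is_tiling_def by (rule conjunct1)
      qed
      fix G assume G: "G \<subseteq> {1..n} \<and> card G = 4"
      have "is_tiling G (sm V (\<lambda>v. S v \<inter> Lambda3 G))"
      proof -
        have C: "condorcet_super_domain G ((\<lambda>T. T \<inter> Lambda3 G) ` D)" using H G by blast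
        have "\<forall>v\<in>V. S v \<inter> Lambda3 G \<in> (\<lambda>T. T \<inter> Lambda3 G) ` D" using A by blast
        then have "finite V \<and> odd (card V) \<and> (\<forall>v\<in>V. S v \<inter> Lambda3 G \<in> (\<lambda>T. T \<inter> Lambda3 G) ` D)"
          using A by simp
        then show ?thesis using C unfolding condorcet_super_domain_def
          by (elim allE[where x=V] allE[where x="\<lambda>v. S v \<inter> Lambda3 G"]) (erule mp)
      qed
      then have T: "is_tiling G (sm V S \<inter> Lambda3 G)" by (simp add: sm_inter)
      have "sm V S \<inter> Lambda3 G \<inter> set (stick G) = sm V S \<inter> set (stick G)"
        using stick_sub[of G G] G by blast
      then show "\<exists>k. sm V S \<inter> set (stick G) = set (take k (stick G)) \<or>
             sm V S \<inter> set (stick G) = set (drop k (stick G))"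
      proof -
        have "G \<subseteq> G \<and> card G = 4" using G by blast
        then show ?thesis using T \<open>sm V S \<inter> Lambda3 G \<inter> set (stick G) = sm V S \<inter> set (stick G)\<close>
          unfolding is_tiling_def by metis
      qed
    qed
  qed
qed

end
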